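(* Let $k\ge 3$ be an integer. Let $T$ be a $(k-1)^+$-branching tree in which exactly one vertex $y$ has degree $k-1$ (so every other internal vertex has degree at least $k$), and suppose $y$ has a neighbour $z$ that is not a leaf. Let $T'$ be the tree obtained from $T$ by contracting the edge $yz$, i.e., deleting $y$ and adding an edge $zx$ for every neighbour $x\ne z$ of $y$. Then $T'$ is $k^+$-branching and $b^{\{y\}}(T)\le b(T')$.
   Context: In a tree, vertices of degree $1$ are leaves and all other vertices are internal vertices; a tree is $m^+$-branching if every internal vertex has degree at least $m$. Graph burning on a graph $G$: in each round $i=1,2,\dots$ a vertex $b_i$ (a source, possibly already burned) is chosen and burned, and simultaneously every unburned neighbour of a vertex burned by the end of round $i-1$ becomes burned; burned vertices stay burned. A sequence $(b_1,\dots,b_m)$ is a burning sequence if all vertices are burned after round $m$; the burning number $b(G)$ is the minimum length of a burning sequence. Modified burning: for $U\subseteq V(G)$ and vertices $x_1,\dots,x_m$, the sequence $(U\cup\{x_1\},x_2,\dots,x_m)$ burns all vertices of $U\cup\{x_1\}$ in round $1$ and proceeds as in ordinary burning in rounds $i\ge 2$ (burning $x_i$ and spreading); it is a modified burning sequence if all vertices are burned after round $m$. $b^{U}(G)$ is the minimum length $m$ of a modified burning sequence for $G$ with the given set $U$. *)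

theory Defs
  imports Main
begin

definition sgraph :: "'a set \<Rightarrow> ('a \<Rightarrow> 'a \<Rightarrow> bool) \<Rightarrow> bool" where
  "sgraph V E \<longleftrightarrow> finite V \<and> (\<forall>u v. E u v \<longrightarrow> u \<in> V \<and> v \<in> V)
     \<and> (\<forall>u v. E u v \<longrightarrow> E v u) \<and> (\<forall>u. \<not> E u u)"

definition degree :: "'a set \<Rightarrow> ('a \<Rightarrow> 'a \<Rightarrow> bool) \<Rightarrow> 'a \<Rightarrow> nat" where
  "degree V E v = card {u \<in> V. E v u}"

definition connected_graph :: "'a set \<Rightarrow> ('a \<Rightarrow> 'a \<Rightarrow> bool) \<Rightarrow> bool" where
  "connected_graph V E \<longleftrightarrow> (\<forall>u\<in>V. \<forall>v\<in>V. E\<^sup>*\<^sup>* u v)"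

definition is_cycle :: "'a set \<Rightarrow> ('a \<Rightarrow> 'a \<Rightarrow> bool) \<Rightarrow> 'a list \<Rightarrow> bool" where
  "is_cycle V E cs \<longleftrightarrow> length cs \<ge> 3 \<and> distinct cs \<and> set cs \<subseteq> V
     \<and> (\<forall>i < length cs. E (cs ! i) (cs ! ((i + 1) mod length cs)))"

definition is_tree :: "'a set \<Rightarrow> ('a \<Rightarrow> 'a \<Rightarrow> bool) \<Rightarrow> bool" where
  "is_tree V E \<longleftrightarrow> sgraph V E \<and> V \<noteq> {} \<and> connected_graph V E \<and> (\<nexists>cs. is_cycle V E cs)"

definition branching :: "nat \<Rightarrow> 'a set \<Rightarrow> ('a \<Rightarrow> 'a \<Rightarrow> bool) \<Rightarrow> bool" where
  "branching m V E \<longleftrightarrow> (\<forall>v\<in>V. degree V E v \<noteq> 1 \<longrightarrow> degree V E v \<ge> m)"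

text \<open>Burned set after round i of the (modified) burning process with initial set U
  and sources xs = [x_1,...,x_m]: round 1 burns U \<union> {x_1}; round i \<ge> 2 spreads to
  neighbours and burns x_i.\<close>
fun burned :: "('a \<Rightarrow> 'a \<Rightarrow> bool) \<Rightarrow> 'a set \<Rightarrow> 'a list \<Rightarrow> nat \<Rightarrow> 'a set" where
  "burned E U xs 0 = {}"
| "burned E U xs (Suc i) =
     (if i = 0 then U \<union> {xs ! 0}
      else burned E U xs i \<union> {v. \<exists>u\<in>burned E U xs i. E u v} \<union> {xs ! i})"

definition mod_burning_seq :: "'a set \<Rightarrow> ('a \<Rightarrow> 'a \<Rightarrow> bool) \<Rightarrow> 'a set \<Rightarrow> 'a list \<Rightarrow> bool" where
  "mod_burning_seq V E U xs \<longleftrightarrow> length xs \<ge> 1 \<and> set xs \<subseteq> V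
     \<and> burned E U xs (length xs) = V"

definition burning_seq :: "'a set \<Rightarrow> ('a \<Rightarrow> 'a \<Rightarrow> bool) \<Rightarrow> 'a list \<Rightarrow> bool" where
  "burning_seq V E xs \<longleftrightarrow> mod_burning_seq V E {} xs"

definition burning_number :: "'a set \<Rightarrow> ('a \<Rightarrow> 'a \<Rightarrow> bool) \<Rightarrow> nat" where
  "burning_number V E = (LEAST m. \<exists>xs. length xs = m \<and> burning_seq V E xs)"

definition mod_burning_number :: "'a set \<Rightarrow> ('a \<Rightarrow> 'a \<Rightarrow> bool) \<Rightarrow> 'a set \<Rightarrow> nat" where
  "mod_burning_number V E U = (LEAST m. \<exists>xs. length xs = m \<and> mod_burning_seq V E U xs)"

definition contract_adj :: "('a \<Rightarrow> 'a \<Rightarrow> bool) \<Rightarrow> 'a \<Rightarrow> 'a \<Rightarrow> 'a \<Rightarrow> 'a \<Rightarrow> bool" where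
  "contract_adj E y z u v \<longleftrightarrow>
     (E u v \<and> u \<noteq> y \<and> v \<noteq> y) \<or> (u = z \<and> E y v \<and> v \<noteq> z) \<or> (v = z \<and> E y u \<and> u \<noteq> z)"

end

theory Submission
  imports Defs
begin

lemma no_tri:
  assumes "is_tree V E" "E a b" "E b c" "E c a" "a \<noteq> b" "b \<noteq> c" "a \<noteq> c"
  shows False
proof -
  have s: "sgraph V E" using assms(1) by (simp add: is_tree_def)
  have V: "a \<in> V" "b \<in> V" "c \<in> V" using s assms(2,3) unfolding sgraph_def by blast+
  have "\<forall>i < 3. E ([a,b,c] ! i) ([a,b,c] ! ((i + 1) mod 3))"
  proof (intro allI impI)
    fix i :: nat assume "i < 3"
    then consider "i = 0" | "i = 1" | "i = 2" by linarith
    then show "E ([a,b,c] ! i) ([a,b,c] ! ((i + 1) mod 3))"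
      by cases (use assms in auto)
  qed
  hence "is_cycle V E [a,b,c]"
    using assms V unfolding is_cycle_def by simp
  thus False using assms(1) unfolding is_tree_def by blast
qed

lemma burned_mono: "burned E U xs i \<subseteq> burned E U xs (Suc i)"
  by (cases i) auto

lemma burned_mono_le: "i \<le> j \<Longrightarrow> burned E U xs i \<subseteq> burned E U xs j"
proof (induction j)
  case 0 then show ?case by simp
next
  case (Suc j) then show ?case using burned_mono[of E U xs j] by (auto simp: le_Suc_eq)
qed

lemma burned_src: "i < n \<Longrightarrow> xs ! i \<in> burned E U xs n"
  using burned_mono_le[of "Suc i" n E U xs] by auto

lemma burned_U: "1 \<le> i \<Longrightarrow> U \<subseteq> burned E U xs i"
  using burned_mono_le[of 1 i E U xs] by auto

lemma burned_sub:
  assumes "U \<subseteq> V" "set xs \<subseteq> V" "\<forall>u v. E u v \<longrightarrow> v \<in> V"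
  shows "i \<le> length xs \<Longrightarrow> burned E U xs i \<subseteq> V"
proof (induction i)
  case 0 then show ?case by simp
next
  case (Suc i)
  have "xs ! i \<in> V" using Suc.prems assms(2) by auto
  then show ?case using Suc assms by auto
qed

lemma burned_cmp:
  assumes "\<And>u v. E' u v \<Longrightarrow> E u v \<or> (E y u \<and> E y v) \<or> (E y u \<and> v = z) \<or> (u = z \<and> E y v)"
    and "E y z"
  shows "1 \<le> i \<Longrightarrow> burned E' {} xs i \<subseteq> burned E {y} xs i"
proof (induction i)
  case 0 then show ?case by simp
next
  case (Suc i)
  show ?case
  proof (cases "i = 0")
    case True then show ?thesis by simp
  next
    case False
    hence IH: "burned E' {} xs i \<subseteq> burned E {y} xs i" using Suc by auto
    have yb: "y \<in> burned E {y} xs i" using burned_U[of i "{y}" E xs] False by auto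
    have "{v. \<exists>u\<in>burned E' {} xs i. E' u v} \<subseteq> burned E {y} xs i \<union> {v. \<exists>u\<in>burned E {y} xs i. E u v}"
    proof
      fix v assume "v \<in> {v. \<exists>u\<in>burned E' {} xs i. E' u v}"
      then obtain u where u: "u \<in> burned E' {} xs i" "E' u v" by auto
      from assms(1)[OF u(2)] u(1) IH yb assms(2) show "v \<in> burned E {y} xs i \<union> {v. \<exists>u\<in>burned E {y} xs i. E u v}"
        by auto
    qed
    then show ?thesis using IH False by auto
  qed
qed

theorem mainTheorem4:
  fixes V :: "'a set" and E :: "'a \<Rightarrow> 'a \<Rightarrow> bool" and k :: nat and y z :: 'a
  assumes "k \<ge> 3"
    and "is_tree V E"
    and "branching (k - 1) V E"
    and "y \<in> V" and "degree V E y = k - 1"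
    and "\<forall>v\<in>V. v \<noteq> y \<longrightarrow> degree V E v \<noteq> 1 \<longrightarrow> degree V E v \<ge> k"
    and "E y z" and "degree V E z \<noteq> 1"
  shows "branching k (V - {y}) (contract_adj E y z)
    \<and> mod_burning_number V E {y} \<le> burning_number (V - {y}) (contract_adj E y z)"
proof -
  let ?E' = "contract_adj E y z"
  have s: "sgraph V E" using assms(2) by (simp add: is_tree_def)
  have fin: "finite V" and inV: "\<And>u v. E u v \<Longrightarrow> u \<in> V \<and> v \<in> V"
    and sym: "\<And>u v. E u v \<Longrightarrow> E v u" and irr: "\<And>u. \<not> E u u"
    using s by (auto simp: sgraph_def)
  have yz: "y \<noteq> z" using assms(7) irr by auto
  have zV: "z \<in> V" using inV[OF assms(7)] by auto
  have tri: "\<And>a b c. E a b \<Longrightarrow> E b c \<Longrightarrow> E c a \<Longrightarrow> False"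
  proof -
    fix a b c assume h: "E a b" "E b c" "E c a"
    have "a \<noteq> b" "b \<noteq> c" "a \<noteq> c" using h irr by auto
    thus False using no_tri[OF assms(2) h] by blast
  qed
  have br: "branching k (V - {y}) ?E'"
    unfolding branching_def
  proof (intro ballI impI)
    fix v assume v: "v \<in> V - {y}" and d1: "degree (V - {y}) ?E' v \<noteq> 1"
    show "degree (V - {y}) ?E' v \<ge> k"
    proof (cases "v = z")
      case True
      have eq: "{u \<in> V - {y}. ?E' v u} = ({u\<in>V. E z u} - {y}) \<union> ({u\<in>V. E y u} - {z})"
        using True yz irr inV unfolding contract_adj_def by auto
      have dis: "({u\<in>V. E z u} - {y}) \<inter> ({u\<in>V. E y u} - {z}) = {}"
      proof (rule ccontr)
        assume "\<not> ?thesis"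
        then obtain u where "E z u" "E y u" by blast
        thus False using tri[of z u y] sym assms(7) by blast
      qed
      have c1: "card ({u\<in>V. E z u} - {y}) = degree V E z - 1"
        unfolding degree_def using assms(4) sym[OF assms(7)] by (simp add: card_Diff_singleton)
      have c2: "card ({u\<in>V. E y u} - {z}) = degree V E y - 1"
        unfolding degree_def using zV assms(7) by (simp add: card_Diff_singleton)
      have dz: "degree V E z \<ge> k"
        using assms(6) zV yz assms(8) by auto
      have "degree (V - {y}) ?E' v = (degree V E z - 1) + (degree V E y - 1)"
        unfolding degree_def[of "V - {y}"] eq
        using card_Un_disjoint[OF _ _ dis] fin c1 c2 by simp
      then show ?thesis using dz assms(1,5) by simp
    next
      case False
      show ?thesis
      proof (cases "E y v")
        case True
        have nz: "\<not> E v z" using tri[of v z y] sym[OF assms(7)] True by blast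
        have eq: "{u \<in> V - {y}. ?E' v u} = insert z ({u\<in>V. E v u} - {y})"
          using False True yz irr inV v zV sym unfolding contract_adj_def by auto
        have "degree (V - {y}) ?E' v = degree V E v"
        proof -
          have yin: "y \<in> {u\<in>V. E v u}" using sym[OF True] assms(4) by simp
          have f: "finite {u\<in>V. E v u}" using fin by simp
          have "card {u\<in>V. E v u} > 0" using yin f card_gt_0_iff by blast
          thus ?thesis
            unfolding degree_def[of "V - {y}"] eq using f nz yin
            by (simp add: card_Diff_singleton degree_def)
        qed
        then show ?thesis using assms(6) v d1 by auto
      next
        case nE: False
        have eq: "{u \<in> V - {y}. ?E' v u} = {u\<in>V. E v u}"
          using False nE yz irr inV v sym unfolding contract_adj_def by auto
        have "degree (V - {y}) ?E' v = degree V E v"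
          unfolding degree_def[of "V - {y}"] eq by (simp add: degree_def)
        then show ?thesis using assms(6) v d1 by auto
      qed
    qed
  qed
  have E'V: "\<And>u v. ?E' u v \<Longrightarrow> v \<in> V - {y}"
    using inV irr zV yz unfolding contract_adj_def by blast
  obtain ys where ys: "set ys = V - {y}" using finite_list[of "V - {y}"] fin by auto
  have ysb: "burning_seq (V - {y}) ?E' ys"
  proof -
    have ne: "length ys \<ge> 1" using ys zV yz by (cases ys) auto
    have "burned ?E' {} ys (length ys) \<subseteq> V - {y}"
      using burned_sub[of "{}" "V - {y}" ys ?E' "length ys"] ys E'V by auto
    moreover have "V - {y} \<subseteq> burned ?E' {} ys (length ys)"
    proof
      fix x assume "x \<in> V - {y}"
      then obtain i where "i < length ys" "x = ys ! i" using ys by (metis in_set_conv_nth)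
      thus "x \<in> burned ?E' {} ys (length ys)" using burned_src by metis
    qed
    ultimately show ?thesis using ne ys unfolding burning_seq_def mod_burning_seq_def by auto
  qed
  obtain xs where xs: "length xs = burning_number (V - {y}) ?E'" "burning_seq (V - {y}) ?E' xs"
    using LeastI_ex[of "\<lambda>m. \<exists>xs. length xs = m \<and> burning_seq (V - {y}) ?E' xs"] ysb
    unfolding burning_number_def by blast
  have xs1: "length xs \<ge> 1" and xsV: "set xs \<subseteq> V - {y}"
    and xsb: "burned ?E' {} xs (length xs) = V - {y}"
    using xs(2) by (auto simp: burning_seq_def mod_burning_seq_def)
  have cmp: "burned ?E' {} xs (length xs) \<subseteq> burned E {y} xs (length xs)"
    by (rule burned_cmp[of ?E' E y z, OF _ assms(7) xs1]) (auto simp: contract_adj_def)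
  have "burned E {y} xs (length xs) \<subseteq> V"
    using burned_sub[of "{y}" V xs E "length xs"] assms(4) xsV inV by auto
  moreover have "y \<in> burned E {y} xs (length xs)" using burned_U[OF xs1, of "{y}" E] by auto
  ultimately have "burned E {y} xs (length xs) = V" using cmp xsb by auto
  hence "mod_burning_seq V E {y} xs" using xs1 xsV by (auto simp: mod_burning_seq_def)
  hence "mod_burning_number V E {y} \<le> length xs"
    unfolding mod_burning_number_def by (intro Least_le) blast
  thus ?thesis using br xs(1) by simp
qed

end
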